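(* Let $P$ be a finite $(3+1)$-free poset with clone sets $C_1,\dots,C_r$ and tangles $T_1,\dots,T_s$ (the parts of $P$, which partition $P$). For each part $X$, regard $\mathrm{Aut}(X)$, the automorphism group of the induced subposet on $X$, as a group of permutations of $P$ acting as the identity on $P\setminus X$. Then each such permutation is an automorphism of $P$, and \[\mathrm{Aut}(P)=\prod_{i=1}^r\mathrm{Aut}(C_i)\times\prod_{j=1}^s\mathrm{Aut}(T_j),\] i.e. the natural map from this direct product to $\mathrm{Aut}(P)$ is a group isomorphism.
   Context: A poset $P$ is $(3+1)$-free if there are no $a,b,c,d\in P$ with $a<b<c$ and $d$ incomparable to each of $a,b,c$. For $a\in P$ let $D_a=\{x\in P:x<a\}$, $U_a=\{x\in P:x>a\}$. Write $a\mathrel{\top}b$ if neither of $D_a,D_b$ contains the other, $a\mathrel{\bot}b$ if neither of $U_a,U_b$ contains the other, and $a\approx b$ if $D_a=D_b$ and $U_a=U_b$. A top of a tangle is a subset $A\subseteq P$ with $|A|\ge2$ that is a connected component of the graph on $P$ with edges $\{a,b\}$ for $a\mathrel{\top}b$; a bottom of a tangle is defined in the same way using $\bot$. A top $A$ and bottom $B$ are matched if there are distinct $a_1,a_2\in A$, $b_1,b_2\in B$ with $b_1<a_1$, $b_2<a_2$ and the pairs $\{a_1,a_2\},\{b_1,b_2\},\{b_1,a_2\},\{b_2,a_1\}$ incomparable; in a $(3+1)$-free poset this is a perfect matching between tops and bottoms of tangles. A tangle is a matched pair $(A,B)$, identified with the set $A\cup B$ and its induced subposet. A clone set is an equivalence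 class of $\approx$ restricted to $P\setminus\bigcup_j (A_j\cup B_j)$, where $(A_j,B_j)$ range over the tangles. Clone sets and tangles are called the parts of $P$. *)

theory Defs
  imports Main "HOL-Library.FuncSet"
begin

definition strict_poset :: "'a set \<Rightarrow> ('a \<Rightarrow> 'a \<Rightarrow> bool) \<Rightarrow> bool" where
  "strict_poset P lt \<longleftrightarrow>
     (\<forall>x\<in>P. \<not> lt x x) \<and>
     (\<forall>x\<in>P. \<forall>y\<in>P. \<forall>z\<in>P. lt x y \<longrightarrow> lt y z \<longrightarrow> lt x z)"

definition incomp :: "('a \<Rightarrow> 'a \<Rightarrow> bool) \<Rightarrow> 'a \<Rightarrow> 'a \<Rightarrow> bool" where
  "incomp lt x y \<longleftrightarrow> x \<noteq> y \<and> \<not> lt x y \<and> \<not> lt y x"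

definition free_3_1 :: "'a set \<Rightarrow> ('a \<Rightarrow> 'a \<Rightarrow> bool) \<Rightarrow> bool" where
  "free_3_1 P lt \<longleftrightarrow>
     \<not> (\<exists>a\<in>P. \<exists>b\<in>P. \<exists>c\<in>P. \<exists>d\<in>P. lt a b \<and> lt b c \<and>
          incomp lt d a \<and> incomp lt d b \<and> incomp lt d c)"

definition down :: "'a set \<Rightarrow> ('a \<Rightarrow> 'a \<Rightarrow> bool) \<Rightarrow> 'a \<Rightarrow> 'a set" where
  "down P lt a = {x\<in>P. lt x a}"

definition up :: "'a set \<Rightarrow> ('a \<Rightarrow> 'a \<Rightarrow> bool) \<Rightarrow> 'a \<Rightarrow> 'a set" where
  "up P lt a = {x\<in>P. lt a x}"

definition top_rel :: "'a set \<Rightarrow> ('a \<Rightarrow> 'a \<Rightarrow> bool) \<Rightarrow> 'a \<Rightarrow> 'a \<Rightarrow> bool" where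
  "top_rel P lt a b \<longleftrightarrow> a \<in> P \<and> b \<in> P \<and>
     \<not> down P lt a \<subseteq> down P lt b \<and> \<not> down P lt b \<subseteq> down P lt a"

definition bot_rel :: "'a set \<Rightarrow> ('a \<Rightarrow> 'a \<Rightarrow> bool) \<Rightarrow> 'a \<Rightarrow> 'a \<Rightarrow> bool" where
  "bot_rel P lt a b \<longleftrightarrow> a \<in> P \<and> b \<in> P \<and>
     \<not> up P lt a \<subseteq> up P lt b \<and> \<not> up P lt b \<subseteq> up P lt a"

definition component :: "'a set \<Rightarrow> ('a \<Rightarrow> 'a \<Rightarrow> bool) \<Rightarrow> 'a \<Rightarrow> 'a set" where
  "component P E a = {b\<in>P. (\<lambda>x y. E x y \<or> E y x)\<^sup>*\<^sup>* a b}"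

definition tops :: "'a set \<Rightarrow> ('a \<Rightarrow> 'a \<Rightarrow> bool) \<Rightarrow> 'a set set" where
  "tops P lt = {component P (top_rel P lt) a | a. a \<in> P \<and> card (component P (top_rel P lt) a) \<ge> 2}"

definition bottoms :: "'a set \<Rightarrow> ('a \<Rightarrow> 'a \<Rightarrow> bool) \<Rightarrow> 'a set set" where
  "bottoms P lt = {component P (bot_rel P lt) a | a. a \<in> P \<and> card (component P (bot_rel P lt) a) \<ge> 2}"

definition matched :: "('a \<Rightarrow> 'a \<Rightarrow> bool) \<Rightarrow> 'a set \<Rightarrow> 'a set \<Rightarrow> bool" where
  "matched lt A B \<longleftrightarrow>
     (\<exists>a1\<in>A. \<exists>a2\<in>A. \<exists>b1\<in>B. \<exists>b2\<in>B. a1 \<noteq> a2 \<and> b1 \<noteq> b2 \<and>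
        lt b1 a1 \<and> lt b2 a2 \<and> incomp lt a1 a2 \<and> incomp lt b1 b2 \<and>
        incomp lt b1 a2 \<and> incomp lt b2 a1)"

text \<open>Tangles, identified with the sets A \<union> B.\<close>

definition tangles :: "'a set \<Rightarrow> ('a \<Rightarrow> 'a \<Rightarrow> bool) \<Rightarrow> 'a set set" where
  "tangles P lt = {A \<union> B | A B. A \<in> tops P lt \<and> B \<in> bottoms P lt \<and> matched lt A B}"

definition clone_sets :: "'a set \<Rightarrow> ('a \<Rightarrow> 'a \<Rightarrow> bool) \<Rightarrow> 'a set set" where
  "clone_sets P lt =
     (let R = P - \<Union>(tangles P lt) in
      {{y\<in>R. down P lt y = down P lt x \<and> up P lt y = up P lt x} | x. x \<in> R})"

definition parts :: "'a set \<Rightarrow> ('a \<Rightarrow> 'a \<Rightarrow> bool) \<Rightarrow> 'a set set" where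
  "parts P lt = clone_sets P lt \<union> tangles P lt"

definition aut :: "('a \<Rightarrow> 'a \<Rightarrow> bool) \<Rightarrow> 'a set \<Rightarrow> ('a \<Rightarrow> 'a) set" where
  "aut lt X = {f. bij_betw f X X \<and> (\<forall>x\<in>X. \<forall>y\<in>X. lt (f x) (f y) \<longleftrightarrow> lt x y) \<and>
                  (\<forall>x. x \<notin> X \<longrightarrow> f x = x)}"

text \<open>The natural map from the direct product of the Aut(X), X a part, to
  permutations of P: the product of the commuting, disjointly supported
  permutations g X, i.e. on each part X it acts as g X.\<close>

definition prod_map :: "'a set set \<Rightarrow> ('a set \<Rightarrow> 'a \<Rightarrow> 'a) \<Rightarrow> 'a \<Rightarrow> 'a" where
  "prod_map Q g = (\<lambda>x. if \<exists>X\<in>Q. x \<in> X then g (THE X. X \<in> Q \<and> x \<in> X) x else x)"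

end

theory Submission
  imports Defs
begin

definition cv :: "('a \<Rightarrow> 'a \<Rightarrow> bool) \<Rightarrow> 'a \<Rightarrow> 'a \<Rightarrow> bool" where
  "cv lt x y = lt y x"

definition sq :: "'a set \<Rightarrow> ('a \<Rightarrow> 'a \<Rightarrow> bool) \<Rightarrow> 'a \<Rightarrow> 'a \<Rightarrow> 'a \<Rightarrow> 'a \<Rightarrow> bool" where
  "sq P lt u v a b \<longleftrightarrow> u \<in> P \<and> v \<in> P \<and> a \<in> P \<and> b \<in> P \<and> lt u a \<and> lt v b \<and>
     incomp lt a b \<and> incomp lt u v \<and> incomp lt u b \<and> incomp lt v a"

lemma incomp_sym: "incomp lt x y = incomp lt y x"
  unfolding incomp_def by auto
lemma sq_sym: "sq P lt u v a b = sq P lt v u b a"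
  unfolding sq_def incomp_def by auto
lemma incomp_flip: "incomp (cv lt) = incomp lt"
  unfolding incomp_def cv_def by (auto intro!: ext)
lemma sq_flip: "sq P (cv lt) a b u v = sq P lt u v a b"
  unfolding sq_def incomp_flip unfolding cv_def incomp_def by auto
lemma down_flip: "down P (cv lt) = up P lt"
  unfolding down_def up_def cv_def by (auto intro!: ext)
lemma up_flip: "up P (cv lt) = down P lt"
  unfolding down_def up_def cv_def by (auto intro!: ext)
lemma top_flip: "top_rel P (cv lt) = bot_rel P lt"
  unfolding top_rel_def bot_rel_def down_flip by (auto intro!: ext)
lemma bot_flip: "bot_rel P (cv lt) = top_rel P lt"
  unfolding top_rel_def bot_rel_def up_flip by (auto intro!: ext)
lemma tops_flip: "tops P (cv lt) = bottoms P lt"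
  unfolding tops_def bottoms_def top_flip ..
lemma bottoms_flip: "bottoms P (cv lt) = tops P lt"
  unfolding tops_def bottoms_def bot_flip ..
lemma matched_flip: "matched (cv lt) B A = matched lt A B"
proof
  assume "matched (cv lt) B A"
  then obtain x1 x2 y1 y2 where h: "x1\<in>B" "x2\<in>B" "y1\<in>A" "y2\<in>A" "x1 \<noteq> x2" "y1 \<noteq> y2"
    "lt x1 y1" "lt x2 y2" "incomp lt x1 x2" "incomp lt y1 y2" "incomp lt y1 x2" "incomp lt y2 x1"
    unfolding matched_def incomp_flip unfolding cv_def by blast
  have "incomp lt x1 y2" "incomp lt x2 y1" using h incomp_sym by metis+
  then show "matched lt A B" unfolding matched_def using h by blast
next
  assume "matched lt A B"
  then obtain a1 a2 b1 b2 where h: "a1\<in>A" "a2\<in>A" "b1\<in>B" "b2\<in>B" "a1 \<noteq> a2" "b1 \<noteq> b2"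
    "lt b1 a1" "lt b2 a2" "incomp lt a1 a2" "incomp lt b1 b2" "incomp lt b1 a2" "incomp lt b2 a1"
    unfolding matched_def by blast
  have "incomp lt a1 b2" "incomp lt a2 b1" using h incomp_sym by metis+
  then show "matched (cv lt) B A" unfolding matched_def incomp_flip unfolding cv_def using h by blast
qed
lemma tangles_flip: "tangles P (cv lt) = tangles P lt"
  unfolding tangles_def tops_flip bottoms_flip matched_flip
  by (metis (no_types, lifting) Un_commute)

lemma top_rel_sym: "top_rel P lt a b = top_rel P lt b a"
  unfolding top_rel_def by blast
lemma bot_rel_sym: "bot_rel P lt a b = bot_rel P lt b a"
  unfolding bot_rel_def by blast

lemma symclp_rtr_sym: "(\<lambda>x y. E x y \<or> E y x)\<^sup>*\<^sup>* a b \<Longrightarrow> (\<lambda>x y. E x y \<or> E y x)\<^sup>*\<^sup>* b a"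
proof (induction rule: rtranclp_induct)
  case base
  then show ?case by simp
next
  case (step y z)
  from step(2) have "(\<lambda>x y. E x y \<or> E y x) z y" by blast
  then show ?case using step(3) by (rule converse_rtranclp_into_rtranclp)
qed

lemma comp_eq: "(\<lambda>x y. E x y \<or> E y x)\<^sup>*\<^sup>* a b \<Longrightarrow> component P E a = component P E b"
proof -
  assume h: "(\<lambda>x y. E x y \<or> E y x)\<^sup>*\<^sup>* a b"
  have h2: "(\<lambda>x y. E x y \<or> E y x)\<^sup>*\<^sup>* b a" using h by (rule symclp_rtr_sym)
  have "(\<lambda>x y. E x y \<or> E y x)\<^sup>*\<^sup>* a c = (\<lambda>x y. E x y \<or> E y x)\<^sup>*\<^sup>* b c" for c
  proof
    assume "(\<lambda>x y. E x y \<or> E y x)\<^sup>*\<^sup>* a c"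
    with h2 show "(\<lambda>x y. E x y \<or> E y x)\<^sup>*\<^sup>* b c" by (rule rtranclp_trans)
  next
    assume "(\<lambda>x y. E x y \<or> E y x)\<^sup>*\<^sup>* b c"
    with h show "(\<lambda>x y. E x y \<or> E y x)\<^sup>*\<^sup>* a c" by (rule rtranclp_trans)
  qed
  then show ?thesis unfolding component_def by simp
qed

lemma comp_neighbor:
  assumes "card (component P E a) \<ge> 2" "t \<in> component P E a"
  shows "\<exists>c. E t c \<or> E c t"
proof -
  have "\<exists>s\<in>component P E a. s \<noteq> t"
  proof (rule ccontr)
    assume "\<not> ?thesis"
    then have "component P E a \<subseteq> {t}" by blast
    then have "card (component P E a) \<le> card {t}" by (intro card_mono) auto
    then show False using assms(1) by simp
  qed
  then obtain s where s: "s \<in> component P E a" "s \<noteq> t" by blast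
  have "(\<lambda>x y. E x y \<or> E y x)\<^sup>*\<^sup>* a t" using assms(2) unfolding component_def by simp
  then have 1: "(\<lambda>x y. E x y \<or> E y x)\<^sup>*\<^sup>* t a" by (rule symclp_rtr_sym)
  have "(\<lambda>x y. E x y \<or> E y x)\<^sup>*\<^sup>* a s" using s(1) unfolding component_def by simp
  with 1 have "(\<lambda>x y. E x y \<or> E y x)\<^sup>*\<^sup>* t s" by (rule rtranclp_trans)
  then show ?thesis
  proof (cases rule: converse_rtranclpE)
    case base
    then show ?thesis using s(2) by simp
  next
    case (step c)
    then show ?thesis by blast
  qed
qed

lemma pm_in: assumes "\<forall>X\<in>Q. \<forall>Y\<in>Q. X \<noteq> Y \<longrightarrow> X \<inter> Y = {}" "X \<in> Q" "x \<in> X"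
  shows "prod_map Q g x = g X x"
proof -
  have "(THE Y. Y \<in> Q \<and> x \<in> Y) = X"
    by (rule the_equality) (use assms in blast)+
  then show ?thesis unfolding prod_map_def using assms(2,3) by auto
qed

lemma pm_out: "x \<notin> \<Union>Q \<Longrightarrow> prod_map Q g x = x"
  unfolding prod_map_def by auto

lemma aut_id: "g \<in> aut lt X \<Longrightarrow> x \<notin> X \<Longrightarrow> g x = x"
  unfolding aut_def by simp
lemma aut_lt: "g \<in> aut lt X \<Longrightarrow> x \<in> X \<Longrightarrow> y \<in> X \<Longrightarrow> lt (g x) (g y) \<longleftrightarrow> lt x y"
  unfolding aut_def by simp
lemma aut_bij: "g \<in> aut lt X \<Longrightarrow> bij_betw g X X"
  unfolding aut_def by simp

lemma aut_mem: "g \<in> aut lt X \<Longrightarrow> x \<in> X \<Longrightarrow> g x \<in> X"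
  unfolding aut_def bij_betw_def by blast

locale pp =
  fixes P :: "'a set" and lt :: "'a \<Rightarrow> 'a \<Rightarrow> bool"
  assumes fin: "finite P" and sp: "strict_poset P lt" and f31: "free_3_1 P lt"
begin

lemma irr: "x \<in> P \<Longrightarrow> \<not> lt x x" using sp unfolding strict_poset_def by blast
lemma tr: "x \<in> P \<Longrightarrow> y \<in> P \<Longrightarrow> z \<in> P \<Longrightarrow> lt x y \<Longrightarrow> lt y z \<Longrightarrow> lt x z"
  using sp unfolding strict_poset_def by blast
lemma no31: "a \<in> P \<Longrightarrow> b \<in> P \<Longrightarrow> c \<in> P \<Longrightarrow> d \<in> P \<Longrightarrow> lt a b \<Longrightarrow> lt b c \<Longrightarrow>
   incomp lt d a \<Longrightarrow> incomp lt d b \<Longrightarrow> incomp lt d c \<Longrightarrow> False"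
  using f31 unfolding free_3_1_def by blast

lemma dual: "pp P (cv lt)"
proof
  show "finite P" by (rule fin)
  show "strict_poset P (cv lt)" using sp unfolding strict_poset_def cv_def by blast
  show "free_3_1 P (cv lt)" unfolding free_3_1_def incomp_flip
  proof (intro notI, elim bexE conjE)
    fix a b c d assume *: "a \<in> P" "b \<in> P" "c \<in> P" "d \<in> P" "cv lt a b" "cv lt b c"
      "incomp lt d a" "incomp lt d b" "incomp lt d c"
    show False by (rule no31[of c b a d]) (use * in \<open>auto simp: cv_def\<close>)
  qed
qed

lemma sq_top: assumes "sq P lt u v a b" shows "top_rel P lt a b"
proof -
  have "u \<in> down P lt a" "u \<notin> down P lt b" "v \<in> down P lt b" "v \<notin> down P lt a"
    "a \<in> P" "b \<in> P"
    using assms unfolding sq_def down_def incomp_def by auto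
  then show ?thesis unfolding top_rel_def by blast
qed
lemma sq_bot: assumes "sq P lt u v a b" shows "bot_rel P lt u v"
proof -
  have "a \<in> up P lt u" "a \<notin> up P lt v" "b \<in> up P lt v" "b \<notin> up P lt u"
    "u \<in> P" "v \<in> P"
    using assms unfolding sq_def up_def incomp_def by auto
  then show ?thesis unfolding bot_rel_def by blast
qed

lemma top_sq: assumes "top_rel P lt a b" shows "\<exists>u v. sq P lt u v a b"
proof -
  from assms obtain u v where u: "u \<in> P" "lt u a" "\<not> lt u b" and v: "v \<in> P" "lt v b" "\<not> lt v a"
    and ab: "a \<in> P" "b \<in> P"
    unfolding top_rel_def down_def by blast
  have "a \<noteq> b" using u by auto
  moreover have "\<not> lt a b" using tr[of u a b] u ab by blast
  moreover have "\<not> lt b a" using tr[of v b a] v ab by blast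
  moreover have "u \<noteq> v" using u v by auto
  moreover have "\<not> lt u v" using tr[of u v b] u v ab by blast
  moreover have "\<not> lt v u" using tr[of v u a] u v ab by blast
  moreover have "u \<noteq> b" using u ab \<open>\<not> lt b a\<close> by auto
  moreover have "\<not> lt b u" using tr[of b u a] u ab \<open>\<not> lt b a\<close> by blast
  moreover have "v \<noteq> a" using v ab \<open>\<not> lt a b\<close> by auto
  moreover have "\<not> lt a v" using tr[of a v b] v ab \<open>\<not> lt a b\<close> by blast
  ultimately have "sq P lt u v a b" unfolding sq_def incomp_def using u v ab by simp
  then show ?thesis by blast
qed


lemma topI: "x \<in> P \<Longrightarrow> y \<in> P \<Longrightarrow> lt p x \<Longrightarrow> \<not> lt p y \<Longrightarrow> lt q y \<Longrightarrow> \<not> lt q x \<Longrightarrow>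
  p \<in> P \<Longrightarrow> q \<in> P \<Longrightarrow> top_rel P lt x y"
  unfolding top_rel_def down_def by blast
lemma botI: "x \<in> P \<Longrightarrow> y \<in> P \<Longrightarrow> lt x p \<Longrightarrow> \<not> lt y p \<Longrightarrow> lt y q \<Longrightarrow> \<not> lt x q \<Longrightarrow>
  p \<in> P \<Longrightarrow> q \<in> P \<Longrightarrow> bot_rel P lt x y"
  unfolding bot_rel_def up_def by blast

lemma bot_sq: assumes "bot_rel P lt u v" shows "\<exists>a b. sq P lt u v a b"
proof -
  interpret d: pp P "cv lt" by (rule dual)
  from assms have "top_rel P (cv lt) u v" by (simp add: top_flip)
  then obtain x y where "sq P (cv lt) x y u v" using d.top_sq by blast
  then have "sq P lt u v x y" by (simp add: sq_flip)
  then show ?thesis by blast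
qed

abbreviation RT where "RT \<equiv> \<lambda>x y. top_rel P lt x y \<or> top_rel P lt y x"
abbreviation RB where "RB \<equiv> \<lambda>x y. bot_rel P lt x y \<or> bot_rel P lt y x"

lemma K1: assumes s1: "sq P lt u v a b" and s2: "sq P lt u' v' a b'" shows "RB\<^sup>*\<^sup>* u u'"
proof -
  have f: "u \<in> P" "v \<in> P" "a \<in> P" "b \<in> P" "lt u a" "lt v b" "\<not> lt v a" "\<not> lt u b"
    using s1 unfolding sq_def incomp_def by auto
  have g: "u' \<in> P" "v' \<in> P" "b' \<in> P" "lt u' a" "lt v' b'" "\<not> lt v' a" "\<not> lt u' b'"
    using s2 unfolding sq_def incomp_def by auto
  have b1: "bot_rel P lt u v" by (rule sq_bot[OF s1])
  have b2: "bot_rel P lt u' v'" by (rule sq_bot[OF s2])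
  show ?thesis
  proof (cases "lt u b'")
    case False
    have "bot_rel P lt u v'" by (rule botI[of u v' a b']) (use f g False in auto)
    then have h1: "RB u v'" by auto
    have h2: "RB v' u'" using b2 by auto
    from h1 h2 show ?thesis by (rule rtranclp_trans[OF r_into_rtranclp r_into_rtranclp])
  next
    case ub': True
    show ?thesis
    proof (cases "lt u' b")
      case False
      have "bot_rel P lt u' v" by (rule botI[of u' v a b]) (use f g False in auto)
      then have h2: "RB v u'" by auto
      have h1: "RB u v" using b1 by auto
      from h1 h2 show ?thesis by (rule rtranclp_trans[OF r_into_rtranclp r_into_rtranclp])
    next
      case True
      have "bot_rel P lt u u'" by (rule botI[of u u' b' b]) (use f g True ub' in auto)
      then show ?thesis by auto
    qed
  qed
qed

lemma K: assumes "RT\<^sup>*\<^sup>* a a'" and s: "sq P lt u v a b"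
  shows "sq P lt u' v' a' b' \<Longrightarrow> RB\<^sup>*\<^sup>* u u'"
  using assms(1)
proof (induction arbitrary: u' v' b' rule: rtranclp_induct)
  case base
  then show ?case using K1[OF s] by simp
next
  case (step y z)
  have "\<exists>p q. sq P lt p q y z"
  proof (cases "top_rel P lt y z")
    case True then show ?thesis by (rule top_sq)
  next
    case False
    then have "top_rel P lt z y" using step(2) by blast
    then obtain p q where "sq P lt p q z y" using top_sq by blast
    then have "sq P lt q p y z" by (simp add: sq_sym)
    then show ?thesis by blast
  qed
  then obtain p q where pq: "sq P lt p q y z" by blast
  have 1: "RB\<^sup>*\<^sup>* u p" using step(3)[OF pq] .
  have 2: "RB p q" using sq_bot[OF pq] by blast
  have "sq P lt q p z y" using pq by (simp add: sq_sym)
  then have 3: "RB\<^sup>*\<^sup>* q u'" using step(4) by (rule K1)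
  have "RB\<^sup>*\<^sup>* u q" using 1 2 by (rule rtranclp.rtrancl_into_rtrancl)
  then show ?case using 3 by (rule rtranclp_trans)
qed

lemma TB: assumes s1: "sq P lt u v x y" and s2: "sq P lt x w p q" shows False
proof -
  have f: "u \<in> P" "v \<in> P" "x \<in> P" "y \<in> P" "lt u x" "lt v y" "incomp lt x y" "incomp lt u v"
    "incomp lt u y" "incomp lt v x"
    using s1 unfolding sq_def by auto
  have g: "w \<in> P" "p \<in> P" "q \<in> P" "lt x p" "lt w q" "incomp lt p q" "incomp lt x w"
    "incomp lt x q" "incomp lt w p"
    using s2 unfolding sq_def by auto
  have yp: "lt y p"
  proof (rule ccontr)
    assume n: "\<not> lt y p"
    have "incomp lt y p" unfolding incomp_def
      using n f g tr[of x p y] by (auto simp: incomp_def)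
    then show False using no31[of u x p y] f g by (auto simp: incomp_def)
  qed
  have uw: "lt u w"
  proof (rule ccontr)
    assume n: "\<not> lt u w"
    have "incomp lt w u" unfolding incomp_def
      using n f g tr[of w u x] by (auto simp: incomp_def)
    then show False using no31[of u x p w] f g by (auto simp: incomp_def)
  qed
  have uq: "lt u q" using tr[of u w q] uw f g by auto
  have yq: "lt y q"
  proof (rule ccontr)
    assume n: "\<not> lt y q"
    have "incomp lt y q" unfolding incomp_def
      using n f g yp tr[of u q y] uq by (auto simp: incomp_def)
    moreover have "incomp lt y w" unfolding incomp_def
      using n f g yp tr[of y w q] tr[of w y p] by (auto simp: incomp_def)
    ultimately show False using no31[of u w q y] f g uw by (auto simp: incomp_def)
  qed
  show False using no31[of v y q x] f g yq by (auto simp: incomp_def)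
qed


lemma comp_sub: "component P E a \<subseteq> P"
  unfolding component_def by blast

lemma tops_sub: "A \<in> tops P lt \<Longrightarrow> A \<subseteq> P"
  unfolding tops_def using comp_sub by blast
lemma bottoms_sub: "B \<in> bottoms P lt \<Longrightarrow> B \<subseteq> P"
  unfolding bottoms_def using comp_sub by blast

lemma top_conn: assumes "A \<in> tops P lt" "x \<in> A" "y \<in> A" shows "RT\<^sup>*\<^sup>* x y"
proof -
  obtain a where A: "A = component P (top_rel P lt) a" using assms(1) unfolding tops_def by blast
  have "RT\<^sup>*\<^sup>* a x" "RT\<^sup>*\<^sup>* a y" using assms(2,3) unfolding A component_def by auto
  then have "RT\<^sup>*\<^sup>* x a" "RT\<^sup>*\<^sup>* a y" using symclp_rtr_sym[of "top_rel P lt" a x] by auto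
  then show ?thesis by (rule rtranclp_trans)
qed

lemma top_closed: assumes "A \<in> tops P lt" "x \<in> A" "RT\<^sup>*\<^sup>* x y" "y \<in> P" shows "y \<in> A"
proof -
  obtain a where A: "A = component P (top_rel P lt) a" using assms(1) unfolding tops_def by blast
  have "RT\<^sup>*\<^sup>* a x" using assms(2) unfolding A component_def by auto
  then have "RT\<^sup>*\<^sup>* a y" using assms(3) by (rule rtranclp_trans)
  then show ?thesis using assms(4) unfolding A component_def by auto
qed

lemma top_closed1: assumes "A \<in> tops P lt" "x \<in> A" "top_rel P lt x y" shows "y \<in> A"
  using top_closed[OF assms(1,2)] assms(3) unfolding top_rel_def by blast

lemma top_neighbor: assumes "A \<in> tops P lt" "x \<in> A" shows "\<exists>c. top_rel P lt x c"
proof -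
  obtain a where A: "A = component P (top_rel P lt) a" "card A \<ge> 2"
    using assms(1) unfolding tops_def by blast
  obtain c where "top_rel P lt x c \<or> top_rel P lt c x"
    using comp_neighbor[of P "top_rel P lt" a x] A assms(2) by blast
  then show ?thesis using top_rel_sym[of P lt x c] by blast
qed

lemma top_inter: assumes "A \<in> tops P lt" "A' \<in> tops P lt" "x \<in> A" "x \<in> A'" shows "A = A'"
proof -
  obtain a where A: "A = component P (top_rel P lt) a" using assms(1) unfolding tops_def by blast
  obtain a' where A': "A' = component P (top_rel P lt) a'" using assms(2) unfolding tops_def by blast
  have "RT\<^sup>*\<^sup>* a x" using assms(3) unfolding A component_def by auto
  then have 1: "A = component P (top_rel P lt) x" unfolding A by (rule comp_eq)
  have "RT\<^sup>*\<^sup>* a' x" using assms(4) unfolding A' component_def by auto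
  then have 2: "A' = component P (top_rel P lt) x" unfolding A' by (rule comp_eq)
  show ?thesis using 1 2 by simp
qed

lemma sq_tangle: assumes s: "sq P lt u v a b"
  shows "component P (top_rel P lt) a \<in> tops P lt" "component P (bot_rel P lt) u \<in> bottoms P lt"
    "a \<in> component P (top_rel P lt) a" "b \<in> component P (top_rel P lt) a"
    "u \<in> component P (bot_rel P lt) u" "v \<in> component P (bot_rel P lt) u"
    "matched lt (component P (top_rel P lt) a) (component P (bot_rel P lt) u)"
proof -
  have f: "u \<in> P" "v \<in> P" "a \<in> P" "b \<in> P" "a \<noteq> b" "u \<noteq> v"
    using s unfolding sq_def incomp_def by auto
  have tr1: "top_rel P lt a b" by (rule sq_top[OF s])
  have br1: "bot_rel P lt u v" by (rule sq_bot[OF s])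
  show a: "a \<in> component P (top_rel P lt) a" using f unfolding component_def by simp
  show b: "b \<in> component P (top_rel P lt) a" using f tr1 unfolding component_def by auto
  show u: "u \<in> component P (bot_rel P lt) u" using f unfolding component_def by simp
  show v: "v \<in> component P (bot_rel P lt) u" using f br1 unfolding component_def by auto
  have "card {a, b} \<le> card (component P (top_rel P lt) a)"
    by (rule card_mono) (use a b finite_subset[OF comp_sub fin] in auto)
  then have "card (component P (top_rel P lt) a) \<ge> 2" using f by simp
  then show "component P (top_rel P lt) a \<in> tops P lt" unfolding tops_def using f by blast
  have "card {u, v} \<le> card (component P (bot_rel P lt) u)"
    by (rule card_mono) (use u v finite_subset[OF comp_sub fin] in auto)
  then have "card (component P (bot_rel P lt) u) \<ge> 2" using f by simp
  then show "component P (bot_rel P lt) u \<in> bottoms P lt" unfolding bottoms_def using f by blast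
  show "matched lt (component P (top_rel P lt) a) (component P (bot_rel P lt) u)"
    unfolding matched_def using s a b u v f unfolding sq_def by blast
qed

lemma matched_sq: assumes "matched lt A B" "A \<in> tops P lt" "B \<in> bottoms P lt"
  shows "\<exists>u v a b. sq P lt u v a b \<and> a \<in> A \<and> b \<in> A \<and> u \<in> B \<and> v \<in> B"
proof -
  obtain a1 a2 b1 b2 where h: "a1\<in>A" "a2\<in>A" "b1\<in>B" "b2\<in>B"
    "lt b1 a1" "lt b2 a2" "incomp lt a1 a2" "incomp lt b1 b2" "incomp lt b1 a2" "incomp lt b2 a1"
    using assms(1) unfolding matched_def by blast
  have "sq P lt b1 b2 a1 a2" unfolding sq_def using h tops_sub[OF assms(2)] bottoms_sub[OF assms(3)]
    by blast
  then show ?thesis using h by blast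
qed

end

context pp begin

lemma bot_conn: assumes "B \<in> bottoms P lt" "x \<in> B" "y \<in> B" shows "RB\<^sup>*\<^sup>* x y"
proof -
  interpret d: pp P "cv lt" by (rule dual)
  show ?thesis using d.top_conn[of B x y] assms unfolding tops_flip top_flip by blast
qed

lemma bot_closed: assumes "B \<in> bottoms P lt" "x \<in> B" "RB\<^sup>*\<^sup>* x y" "y \<in> P" shows "y \<in> B"
proof -
  interpret d: pp P "cv lt" by (rule dual)
  show ?thesis using d.top_closed[of B x y] assms unfolding tops_flip top_flip by blast
qed

lemma bot_closed1: assumes "B \<in> bottoms P lt" "x \<in> B" "bot_rel P lt x y" shows "y \<in> B"
proof -
  interpret d: pp P "cv lt" by (rule dual)
  show ?thesis using d.top_closed1[of B x y] assms unfolding tops_flip top_flip by blast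
qed

lemma bot_neighbor: assumes "B \<in> bottoms P lt" "x \<in> B" shows "\<exists>c. bot_rel P lt x c"
proof -
  interpret d: pp P "cv lt" by (rule dual)
  show ?thesis using d.top_neighbor[of B x] assms unfolding tops_flip top_flip by blast
qed

lemma bot_inter: assumes "B \<in> bottoms P lt" "B' \<in> bottoms P lt" "x \<in> B" "x \<in> B'" shows "B = B'"
proof -
  interpret d: pp P "cv lt" by (rule dual)
  show ?thesis using d.top_inter[of B B' x] assms unfolding tops_flip by blast
qed

lemma sq_top_in: assumes "A \<in> tops P lt" "B \<in> bottoms P lt" "matched lt A B"
  "sq P lt u v a b" "a \<in> A" shows "u \<in> B"
proof -
  obtain u0 v0 a0 b0 where s0: "sq P lt u0 v0 a0 b0" "a0 \<in> A" "u0 \<in> B"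
    using matched_sq[OF assms(3,1,2)] by blast
  have "RT\<^sup>*\<^sup>* a0 a" using top_conn[OF assms(1) s0(2) assms(5)] .
  then have "RB\<^sup>*\<^sup>* u0 u" using K s0(1) assms(4) by blast
  moreover have "u \<in> P" using assms(4) unfolding sq_def by auto
  ultimately show ?thesis using bot_closed[OF assms(2) s0(3)] by blast
qed

end

context pp begin

lemma sq_bot_in: assumes "A \<in> tops P lt" "B \<in> bottoms P lt" "matched lt A B"
  "sq P lt u v a b" "u \<in> B" shows "a \<in> A"
proof -
  interpret d: pp P "cv lt" by (rule dual)
  show ?thesis
    by (rule d.sq_top_in[of B A a b u v, unfolded tops_flip bottoms_flip matched_flip sq_flip])
      (use assms in auto)
qed

lemma top_bot_disj: assumes "A \<in> tops P lt" "B \<in> bottoms P lt" shows "A \<inter> B = {}"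
proof (rule ccontr)
  assume "A \<inter> B \<noteq> {}"
  then obtain x where x: "x \<in> A" "x \<in> B" by blast
  obtain c where "top_rel P lt x c" using top_neighbor[OF assms(1) x(1)] by blast
  then obtain u v where s1: "sq P lt u v x c" using top_sq by blast
  obtain c' where "bot_rel P lt x c'" using bot_neighbor[OF assms(2) x(2)] by blast
  then obtain p q where s2: "sq P lt x c' p q" using bot_sq by blast
  show False by (rule TB[OF s1 s2])
qed

lemma matched_unique_top: assumes "A \<in> tops P lt" "B \<in> bottoms P lt" "B' \<in> bottoms P lt"
  "matched lt A B" "matched lt A B'" shows "B = B'"
proof -
  obtain u v a b where s: "sq P lt u v a b" "a \<in> A" "u \<in> B'"
    using matched_sq[OF assms(5,1,3)] by blast
  have "u \<in> B" using sq_top_in[OF assms(1,2,4) s(1,2)] .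
  then show ?thesis using bot_inter[OF assms(2,3)] s(3) by blast
qed

lemma matched_unique_bot: assumes "A \<in> tops P lt" "A' \<in> tops P lt" "B \<in> bottoms P lt"
  "matched lt A B" "matched lt A' B" shows "A = A'"
proof -
  interpret d: pp P "cv lt" by (rule dual)
  show ?thesis
    by (rule d.matched_unique_top[of B A A', unfolded tops_flip bottoms_flip matched_flip])
      (use assms in auto)
qed


lemma tangleE: assumes "T \<in> tangles P lt"
  obtains A B where "T = A \<union> B" "A \<in> tops P lt" "B \<in> bottoms P lt" "matched lt A B"
  using assms unfolding tangles_def by blast

lemma tangles_sub: "T \<in> tangles P lt \<Longrightarrow> T \<subseteq> P"
  by (erule tangleE) (use tops_sub bottoms_sub in blast)

lemma tangles_disj: assumes "T1 \<in> tangles P lt" "T2 \<in> tangles P lt" "T1 \<noteq> T2"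
  shows "T1 \<inter> T2 = {}"
proof -
  obtain A1 B1 where 1: "T1 = A1 \<union> B1" "A1 \<in> tops P lt" "B1 \<in> bottoms P lt" "matched lt A1 B1"
    using assms(1) by (rule tangleE)
  obtain A2 B2 where 2: "T2 = A2 \<union> B2" "A2 \<in> tops P lt" "B2 \<in> bottoms P lt" "matched lt A2 B2"
    using assms(2) by (rule tangleE)
  have nA: "A1 \<noteq> A2"
  proof
    assume e: "A1 = A2"
    then have "B1 = B2" using matched_unique_top[OF 1(2) 1(3) 2(3) 1(4)] 2(4) by simp
    then show False using e 1(1) 2(1) assms(3) by simp
  qed
  have nB: "B1 \<noteq> B2"
  proof
    assume e: "B1 = B2"
    then have "A1 = A2" using matched_unique_bot[OF 1(2) 2(2) 1(3) 1(4)] 2(4) by simp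
    then show False using nA by simp
  qed
  have "A1 \<inter> A2 = {}" using top_inter[OF 1(2) 2(2)] nA by blast
  moreover have "B1 \<inter> B2 = {}" using bot_inter[OF 1(3) 2(3)] nB by blast
  moreover have "A1 \<inter> B2 = {}" by (rule top_bot_disj[OF 1(2) 2(3)])
  moreover have "A2 \<inter> B1 = {}" by (rule top_bot_disj[OF 2(2) 1(3)])
  ultimately show ?thesis using 1(1) 2(1) by blast
qed

lemma in_tangles: "x \<in> \<Union>(tangles P lt) \<longleftrightarrow> x \<in> P \<and> ((\<exists>c. top_rel P lt x c) \<or> (\<exists>c. bot_rel P lt x c))"
proof
  assume "x \<in> \<Union>(tangles P lt)"
  then obtain T where T: "T \<in> tangles P lt" "x \<in> T" by blast
  obtain A B where 1: "T = A \<union> B" "A \<in> tops P lt" "B \<in> bottoms P lt" "matched lt A B"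
    using T(1) by (rule tangleE)
  have "x \<in> P" using tangles_sub[OF T(1)] T(2) by blast
  moreover have "(\<exists>c. top_rel P lt x c) \<or> (\<exists>c. bot_rel P lt x c)"
    using T(2) 1 top_neighbor bot_neighbor by blast
  ultimately show "x \<in> P \<and> ((\<exists>c. top_rel P lt x c) \<or> (\<exists>c. bot_rel P lt x c))" by blast
next
  assume h: "x \<in> P \<and> ((\<exists>c. top_rel P lt x c) \<or> (\<exists>c. bot_rel P lt x c))"
  show "x \<in> \<Union>(tangles P lt)"
  proof (cases "\<exists>c. top_rel P lt x c")
    case True
    then obtain c u v where s: "sq P lt u v x c" using top_sq by blast
    note st = sq_tangle[OF s]
    have "component P (top_rel P lt) x \<union> component P (bot_rel P lt) u \<in> tangles P lt"
      unfolding tangles_def using st by blast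
    then show ?thesis using st(3) by blast
  next
    case False
    then obtain c where "bot_rel P lt x c" using h by blast
    then obtain p q where s: "sq P lt x c p q" using bot_sq by blast
    note st = sq_tangle[OF s]
    have "component P (top_rel P lt) p \<union> component P (bot_rel P lt) x \<in> tangles P lt"
      unfolding tangles_def using st by blast
    then show ?thesis using st(5) by blast
  qed
qed

lemma up_step_top: assumes s: "sq P lt u v a b" and "lt a z" "z \<in> P" shows "lt b z"
proof (rule ccontr)
  assume n: "\<not> lt b z"
  have f: "u \<in> P" "a \<in> P" "b \<in> P" "lt u a" "incomp lt b u" "incomp lt b a"
    using s unfolding sq_def incomp_def by auto
  have "incomp lt b z" unfolding incomp_def
    using n assms tr[of a z b] s unfolding sq_def incomp_def by auto
  then show False using no31[of u a z b] f assms by blast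
qed

lemma E1: assumes "A \<in> tops P lt" "a \<in> A" "a' \<in> A" "lt a z" "z \<in> P" shows "lt a' z"
proof -
  have "RT\<^sup>*\<^sup>* a a'" by (rule top_conn[OF assms(1-3)])
  then show ?thesis
  proof (induction rule: rtranclp_induct)
    case base then show ?case using assms(4) .
  next
    case (step y w)
    have "\<exists>p q. sq P lt p q y w"
    proof (cases "top_rel P lt y w")
      case True then show ?thesis by (rule top_sq)
    next
      case False
      then have "top_rel P lt w y" using step(2) by blast
      then obtain p q where "sq P lt p q w y" using top_sq by blast
      then have "sq P lt q p y w" by (simp add: sq_sym)
      then show ?thesis by blast
    qed
    then obtain p q where "sq P lt p q y w" by blast
    then show ?case using up_step_top step(3) assms(5) by blast
  qed
qed

lemma E2: assumes "A \<in> tops P lt" "B \<in> bottoms P lt" "matched lt A B"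
  "b \<in> B" "b' \<in> B" "lt b z" "z \<in> P" "z \<notin> A" shows "lt b' z"
proof -
  have "RB\<^sup>*\<^sup>* b b'" by (rule bot_conn[OF assms(2,4,5)])
  then have "b' \<in> B \<and> lt b' z"
  proof (induction rule: rtranclp_induct)
    case base then show ?case using assms(4,6) by simp
  next
    case (step y w)
    have yB: "y \<in> B" "lt y z" using step(3) by auto
    have "\<exists>p q. sq P lt y w p q"
    proof (cases "bot_rel P lt y w")
      case True then show ?thesis by (rule bot_sq)
    next
      case False
      then have "bot_rel P lt w y" using step(2) by blast
      then obtain p q where "sq P lt w y p q" using bot_sq by blast
      then have "sq P lt y w q p" by (simp add: sq_sym)
      then show ?thesis by blast
    qed
    then obtain p q where s: "sq P lt y w p q" by blast
    have pA: "p \<in> A" by (rule sq_bot_in[OF assms(1-3) s yB(1)])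
    have qA: "q \<in> A" by (rule top_closed1[OF assms(1) pA sq_top[OF s]])
    have wB: "w \<in> B"
      by (rule bot_closed1[OF assms(2) yB(1) sq_bot[OF s]])
    have "lt w z"
    proof (rule ccontr)
      assume n: "\<not> lt w z"
      have f: "y \<in> P" "w \<in> P" "q \<in> P" "\<not> lt y q" "lt w q"
        using s unfolding sq_def incomp_def by auto
      have "top_rel P lt z q" by (rule topI[of z q y w]) (use f n yB assms(7) in auto)
      then have "top_rel P lt q z" using top_rel_sym by metis
      then have "z \<in> A" by (rule top_closed1[OF assms(1) qA])
      then show False using assms(8) by simp
    qed
    then show ?case using wB by simp
  qed
  then show ?thesis by simp
qed

end

context pp begin

lemma E1d: assumes "B \<in> bottoms P lt" "b \<in> B" "b' \<in> B" "lt z b" "z \<in> P" shows "lt z b'"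
proof -
  interpret d: pp P "cv lt" by (rule dual)
  have "cv lt b' z"
    by (rule d.E1[of B b b' z, unfolded tops_flip]) (use assms in \<open>auto simp: cv_def\<close>)
  then show ?thesis by (simp add: cv_def)
qed

lemma E2d: assumes "A \<in> tops P lt" "B \<in> bottoms P lt" "matched lt A B"
  "a \<in> A" "a' \<in> A" "lt z a" "z \<in> P" "z \<notin> B" shows "lt z a'"
proof -
  interpret d: pp P "cv lt" by (rule dual)
  have "cv lt a' z"
    by (rule d.E2[of B A a a' z, unfolded tops_flip bottoms_flip matched_flip])
      (use assms in \<open>auto simp: cv_def\<close>)
  then show ?thesis by (simp add: cv_def)
qed


lemma aut_ext_gen: assumes "X \<subseteq> P" "g \<in> aut lt X"
  and h1: "\<And>x y. x \<in> X \<Longrightarrow> y \<in> P \<Longrightarrow> y \<notin> X \<Longrightarrow> lt (g x) y \<longleftrightarrow> lt x y"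
  and h2: "\<And>x y. x \<in> X \<Longrightarrow> y \<in> P \<Longrightarrow> y \<notin> X \<Longrightarrow> lt y (g x) \<longleftrightarrow> lt y x"
  shows "g \<in> aut lt P"
proof -
  have b: "bij_betw g X X" and pr: "\<And>x y. x \<in> X \<Longrightarrow> y \<in> X \<Longrightarrow> lt (g x) (g y) \<longleftrightarrow> lt x y"
    and id: "\<And>x. x \<notin> X \<Longrightarrow> g x = x"
    using assms(2) unfolding aut_def by auto
  have gX: "x \<in> X \<Longrightarrow> g x \<in> X" for x using b by (meson bij_betwE)
  have "inj_on g P"
  proof (rule inj_onI)
    fix x y assume xy: "x \<in> P" "y \<in> P" "g x = g y"
    show "x = y"
    proof (cases "x \<in> X")
      case True
      show ?thesis
      proof (cases "y \<in> X")
        case True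
        then show ?thesis using \<open>x \<in> X\<close> xy(3) b unfolding bij_betw_def inj_on_def by blast
      next
        case False
        then show ?thesis using gX[OF \<open>x \<in> X\<close>] id[OF False] xy(3) by simp
      qed
    next
      case False
      show ?thesis
      proof (cases "y \<in> X")
        case True
        then show ?thesis using gX[OF True] id[OF False] xy(3) False by simp
      next
        case False
        then show ?thesis using id[OF False] id[OF \<open>x \<notin> X\<close>] xy(3) by simp
      qed
    qed
  qed
  moreover have "g ` P = P"
  proof -
    have "g ` P = g ` X \<union> g ` (P - X)" using assms(1) by blast
    also have "g ` X = X" using b by (simp add: bij_betw_def)
    also have "g ` (P - X) = P - X" using id by auto
    finally show ?thesis using assms(1) by blast
  qed
  ultimately have "bij_betw g P P" unfolding bij_betw_def by simp
  moreover have "\<forall>x\<in>P. \<forall>y\<in>P. lt (g x) (g y) \<longleftrightarrow> lt x y"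
  proof (intro ballI)
    fix x y assume xy: "x \<in> P" "y \<in> P"
    show "lt (g x) (g y) \<longleftrightarrow> lt x y"
    proof (cases "x \<in> X"; cases "y \<in> X")
      assume "x \<in> X" "y \<in> X" then show ?thesis by (rule pr)
    next
      assume "x \<in> X" "y \<notin> X" then show ?thesis using h1 id xy by simp
    next
      assume "x \<notin> X" "y \<in> X" then show ?thesis using h2 id xy by simp
    next
      assume "x \<notin> X" "y \<notin> X" then show ?thesis using id by simp
    qed
  qed
  moreover have "\<forall>x. x \<notin> P \<longrightarrow> g x = x" using id assms(1) by blast
  ultimately show ?thesis unfolding aut_def by blast
qed

lemma sq_map: assumes "g \<in> aut lt T" "T \<subseteq> P" "sq P lt u v a b" "u \<in> T" "v \<in> T" "a \<in> T" "b \<in> T"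
  shows "sq P lt (g u) (g v) (g a) (g b)"
proof -
  have b: "bij_betw g T T" and pr: "\<And>x y. x \<in> T \<Longrightarrow> y \<in> T \<Longrightarrow> lt (g x) (g y) \<longleftrightarrow> lt x y"
    using assms(1) unfolding aut_def by auto
  have gT: "x \<in> T \<Longrightarrow> g x \<in> T" for x using b by (meson bij_betwE)
  have ne: "x \<in> T \<Longrightarrow> y \<in> T \<Longrightarrow> g x = g y \<longleftrightarrow> x = y" for x y
    using b unfolding bij_betw_def inj_on_def by blast
  have ic: "x \<in> T \<Longrightarrow> y \<in> T \<Longrightarrow> incomp lt (g x) (g y) \<longleftrightarrow> incomp lt x y" for x y
    unfolding incomp_def using ne pr by simp
  show ?thesis using assms(3-7) gT assms(2) pr ic unfolding sq_def by auto
qed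

lemma tangle_parts: assumes "A \<in> tops P lt" "B \<in> bottoms P lt" "matched lt A B"
  "g \<in> aut lt (A \<union> B)" "x \<in> A \<union> B"
  shows "g x \<in> A \<longleftrightarrow> x \<in> A" "g x \<in> B \<longleftrightarrow> x \<in> B"
proof -
  let ?T = "A \<union> B"
  have TP: "?T \<subseteq> P" using tops_sub[OF assms(1)] bottoms_sub[OF assms(2)] by blast
  have gT: "g x \<in> ?T" using aut_mem[OF assms(4,5)] .
  have dis: "A \<inter> B = {}" by (rule top_bot_disj[OF assms(1,2)])
  have AtoA: "g x \<in> A" if xA: "x \<in> A"
  proof -
    obtain c where "top_rel P lt x c" using top_neighbor[OF assms(1) xA] by blast
    then obtain u v where s: "sq P lt u v x c" using top_sq by blast
    have cA: "c \<in> A" using top_closed1[OF assms(1) xA sq_top[OF s]] .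
    have uB: "u \<in> B" by (rule sq_top_in[OF assms(1-3) s xA])
    have vB: "v \<in> B" by (rule bot_closed1[OF assms(2) uB sq_bot[OF s]])
    have s2: "sq P lt (g u) (g v) (g x) (g c)"
      by (rule sq_map[OF assms(4) TP s]) (use xA cA uB vB in auto)
    note st = sq_tangle[OF s2]
    have "g x \<notin> B"
      using top_bot_disj[OF st(1) assms(2)] st(3) by blast
    then show ?thesis using gT by blast
  qed
  have BtoB: "g x \<in> B" if xB: "x \<in> B"
  proof -
    obtain c where "bot_rel P lt x c" using bot_neighbor[OF assms(2) xB] by blast
    then obtain p q where s: "sq P lt x c p q" using bot_sq by blast
    have cB: "c \<in> B" using bot_closed1[OF assms(2) xB sq_bot[OF s]] .
    have pA: "p \<in> A" by (rule sq_bot_in[OF assms(1-3) s xB])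
    have qA: "q \<in> A" by (rule top_closed1[OF assms(1) pA sq_top[OF s]])
    have s2: "sq P lt (g x) (g c) (g p) (g q)"
      by (rule sq_map[OF assms(4) TP s]) (use xB cB pA qA in auto)
    note st = sq_tangle[OF s2]
    have "g x \<notin> A"
      using top_bot_disj[OF assms(1) st(2)] st(5) by blast
    then show ?thesis using gT by blast
  qed
  show "g x \<in> A \<longleftrightarrow> x \<in> A" using AtoA BtoB assms(5) dis by blast
  show "g x \<in> B \<longleftrightarrow> x \<in> B" using AtoA BtoB assms(5) dis by blast
qed

lemma aut_ext_tangle: assumes "T \<in> tangles P lt" "g \<in> aut lt T" shows "g \<in> aut lt P"
proof -
  obtain A B where 1: "T = A \<union> B" "A \<in> tops P lt" "B \<in> bottoms P lt" "matched lt A B"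
    using assms(1) by (rule tangleE)
  have gT: "x \<in> T \<Longrightarrow> g x \<in> T" for x using aut_mem[OF assms(2)] .
  note tp = tangle_parts[OF 1(2-4) assms(2)[unfolded 1(1)]]
  show ?thesis
  proof (rule aut_ext_gen[OF tangles_sub[OF assms(1)] assms(2)])
    fix x y assume h: "x \<in> T" "y \<in> P" "y \<notin> T"
    have gx: "g x \<in> T" using gT h(1) .
    show "lt (g x) y \<longleftrightarrow> lt x y"
    proof (cases "x \<in> A")
      case True
      then have "g x \<in> A" using tp(1) h(1) 1(1) by blast
      then show ?thesis using E1[OF 1(2)] True h(2) by blast
    next
      case False
      then have "x \<in> B" "g x \<in> B" using tp(2) h(1) 1(1) by blast+
      then show ?thesis using E2[OF 1(2-4)] h(2,3) 1(1) by blast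
    qed
    show "lt y (g x) \<longleftrightarrow> lt y x"
    proof (cases "x \<in> B")
      case True
      then have "g x \<in> B" using tp(2) h(1) 1(1) by blast
      then show ?thesis using E1d[OF 1(3)] True h(2) by blast
    next
      case False
      then have "x \<in> A" "g x \<in> A" using tp(1) h(1) 1(1) by blast+
      then show ?thesis using E2d[OF 1(2-4)] h(2,3) 1(1) by blast
    qed
  qed
qed


lemma cloneE: assumes "C \<in> clone_sets P lt"
  obtains x where "x \<in> P" "x \<notin> \<Union>(tangles P lt)"
    "C = {y\<in>P - \<Union>(tangles P lt). down P lt y = down P lt x \<and> up P lt y = up P lt x}"
  using assms unfolding clone_sets_def Let_def by blast

lemma aut_ext_clone: assumes "C \<in> clone_sets P lt" "g \<in> aut lt C" shows "g \<in> aut lt P"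
proof -
  obtain x0 where x0: "C = {y\<in>P - \<Union>(tangles P lt). down P lt y = down P lt x0 \<and> up P lt y = up P lt x0}"
    using assms(1) by (rule cloneE)
  have CP: "C \<subseteq> P" using x0 by blast
  have du: "x \<in> C \<Longrightarrow> down P lt (g x) = down P lt x \<and> up P lt (g x) = up P lt x" for x
    using aut_mem[OF assms(2), of x] x0 by auto
  show ?thesis
  proof (rule aut_ext_gen[OF CP assms(2)])
    fix x y assume h: "x \<in> C" "y \<in> P" "y \<notin> C"
    have "lt (g x) y \<longleftrightarrow> y \<in> up P lt (g x)" using h(2) unfolding up_def by simp
    also have "\<dots> \<longleftrightarrow> y \<in> up P lt x" using du[OF h(1)] by simp
    also have "\<dots> \<longleftrightarrow> lt x y" using h(2) unfolding up_def by simp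
    finally show "lt (g x) y \<longleftrightarrow> lt x y" .
    have "lt y (g x) \<longleftrightarrow> y \<in> down P lt (g x)" using h(2) unfolding down_def by simp
    also have "\<dots> \<longleftrightarrow> y \<in> down P lt x" using du[OF h(1)] by simp
    also have "\<dots> \<longleftrightarrow> lt y x" using h(2) unfolding down_def by simp
    finally show "lt y (g x) \<longleftrightarrow> lt y x" .
  qed
qed

lemma aut_ext: assumes "X \<in> parts P lt" shows "aut lt X \<subseteq> aut lt P"
  using assms aut_ext_clone aut_ext_tangle unfolding parts_def by blast

lemma down_img: assumes "f \<in> aut lt P" "x \<in> P" shows "down P lt (f x) = f ` down P lt x"
proof -
  have b: "bij_betw f P P" and pr: "\<And>x y. x \<in> P \<Longrightarrow> y \<in> P \<Longrightarrow> lt (f x) (f y) \<longleftrightarrow> lt x y"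
    using assms(1) unfolding aut_def by auto
  have im: "f ` P = P" using b by (simp add: bij_betw_def)
  show ?thesis
  proof
    show "down P lt (f x) \<subseteq> f ` down P lt x"
    proof
      fix y assume "y \<in> down P lt (f x)"
      then have y: "y \<in> P" "lt y (f x)" unfolding down_def by auto
      then obtain y0 where "y0 \<in> P" "y = f y0" using im by blast
      then show "y \<in> f ` down P lt x" using y pr[of y0 x] assms(2) unfolding down_def by auto
    qed
    show "f ` down P lt x \<subseteq> down P lt (f x)"
      using pr assms(2) im unfolding down_def by auto
  qed
qed

lemma down_eq_or_top: assumes "f \<in> aut lt P" "x \<in> P"
  shows "down P lt (f x) = down P lt x \<or> top_rel P lt x (f x)"
proof -
  have b: "bij_betw f P P" using assms(1) unfolding aut_def by auto
  have fx: "f x \<in> P" using aut_mem[OF assms] .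
  have dP: "down P lt x \<subseteq> P" unfolding down_def by auto
  have fin1: "finite (down P lt x)" using finite_subset[OF dP fin] .
  have inj: "inj_on f (down P lt x)" using b dP unfolding bij_betw_def by (meson inj_on_subset)
  have c: "card (down P lt (f x)) = card (down P lt x)"
    unfolding down_img[OF assms] using card_image[OF inj] .
  have fin2: "finite (down P lt (f x))" using finite_subset[OF _ fin] unfolding down_def by auto
  show ?thesis
  proof (cases "top_rel P lt x (f x)")
    case False
    then have "down P lt x \<subseteq> down P lt (f x) \<or> down P lt (f x) \<subseteq> down P lt x"
      using assms(2) fx unfolding top_rel_def by blast
    then have "down P lt (f x) = down P lt x"
      using card_subset_eq[OF fin2] card_subset_eq[OF fin1] c by metis
    then show ?thesis by simp
  qed simp
qed

lemma aut_flip: "aut (cv lt) X = aut lt X"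
  unfolding aut_def cv_def by auto

end

context pp begin

lemma up_eq_or_bot: assumes "f \<in> aut lt P" "x \<in> P"
  shows "up P lt (f x) = up P lt x \<or> bot_rel P lt x (f x)"
proof -
  interpret d: pp P "cv lt" by (rule dual)
  show ?thesis using d.down_eq_or_top[of f x, unfolded aut_flip down_flip top_flip] assms by blast
qed

lemma top_same_down: "down P lt x = down P lt y \<Longrightarrow> x \<in> P \<Longrightarrow> y \<in> P \<Longrightarrow>
  top_rel P lt x c \<longleftrightarrow> top_rel P lt y c"
  unfolding top_rel_def by simp

lemma aut_top: assumes "A \<in> tops P lt" "f \<in> aut lt P" "t \<in> A" shows "f t \<in> A"
proof -
  have tP: "t \<in> P" using tops_sub[OF assms(1)] assms(3) by blast
  have fP: "f t \<in> P" using aut_mem[OF assms(2) tP] .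
  show ?thesis
  proof (cases "top_rel P lt t (f t)")
    case True then show ?thesis using top_closed1[OF assms(1,3)] by blast
  next
    case False
    then have e: "down P lt (f t) = down P lt t" using down_eq_or_top[OF assms(2) tP] by simp
    obtain c where c: "top_rel P lt t c" using top_neighbor[OF assms(1,3)] by blast
    have cA: "c \<in> A" using top_closed1[OF assms(1,3) c] .
    have "top_rel P lt (f t) c" using c top_same_down[OF e fP tP] by simp
    then have "top_rel P lt c (f t)" using top_rel_sym by metis
    then show ?thesis using top_closed1[OF assms(1) cA] by blast
  qed
qed

end

context pp begin

lemma aut_bot: assumes "B \<in> bottoms P lt" "f \<in> aut lt P" "t \<in> B" shows "f t \<in> B"
proof -
  interpret d: pp P "cv lt" by (rule dual)
  show ?thesis by (rule d.aut_top[of B f t, unfolded tops_flip aut_flip]) (use assms in auto)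
qed

lemma aut_part: assumes "X \<in> parts P lt" "f \<in> aut lt P" "x \<in> X" shows "f x \<in> X"
proof (cases "X \<in> tangles P lt")
  case True
  obtain A B where 1: "X = A \<union> B" "A \<in> tops P lt" "B \<in> bottoms P lt" "matched lt A B"
    using True by (rule tangleE)
  show ?thesis using aut_top[OF 1(2) assms(2)] aut_bot[OF 1(3) assms(2)] assms(3) 1(1) by blast
next
  case False
  then have C: "X \<in> clone_sets P lt" using assms(1) unfolding parts_def by blast
  obtain x0 where x0: "X = {y\<in>P - \<Union>(tangles P lt). down P lt y = down P lt x0 \<and> up P lt y = up P lt x0}"
    using C by (rule cloneE)
  have xP: "x \<in> P" and xR: "x \<notin> \<Union>(tangles P lt)" using assms(3) x0 by auto
  have nt: "\<not> (\<exists>c. top_rel P lt x c)" "\<not> (\<exists>c. bot_rel P lt x c)" using xR xP in_tangles by blast+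
  have fP: "f x \<in> P" using aut_mem[OF assms(2) xP] .
  have d: "down P lt (f x) = down P lt x" using down_eq_or_top[OF assms(2) xP] nt by blast
  have u: "up P lt (f x) = up P lt x" using up_eq_or_bot[OF assms(2) xP] nt by blast
  have "\<not> (\<exists>c. top_rel P lt (f x) c)" using nt top_same_down[OF d fP xP] by blast
  moreover have "\<not> (\<exists>c. bot_rel P lt (f x) c)" using nt u fP xP unfolding bot_rel_def by simp
  ultimately have "f x \<notin> \<Union>(tangles P lt)" using in_tangles by blast
  then show ?thesis using fP d u assms(3) x0 by auto
qed


lemma parts_disj: "\<forall>X\<in>parts P lt. \<forall>Y\<in>parts P lt. X \<noteq> Y \<longrightarrow> X \<inter> Y = {}"
proof (intro ballI impI)
  fix X Y assume h: "X \<in> parts P lt" "Y \<in> parts P lt" "X \<noteq> Y"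
  show "X \<inter> Y = {}"
  proof (cases "X \<in> tangles P lt")
    case XT: True
    show ?thesis
    proof (cases "Y \<in> tangles P lt")
      case True then show ?thesis using tangles_disj XT h(3) by blast
    next
      case False
      then have "Y \<in> clone_sets P lt" using h(2) unfolding parts_def by blast
      then obtain y0 where "Y = {y\<in>P - \<Union>(tangles P lt). down P lt y = down P lt y0 \<and> up P lt y = up P lt y0}"
        by (rule cloneE)
      then show ?thesis using XT by blast
    qed
  next
    case XF: False
    then have "X \<in> clone_sets P lt" using h(1) unfolding parts_def by blast
    then obtain x0 where x0: "X = {y\<in>P - \<Union>(tangles P lt). down P lt y = down P lt x0 \<and> up P lt y = up P lt x0}"
      by (rule cloneE)
    show ?thesis
    proof (cases "Y \<in> tangles P lt")
      case True then show ?thesis using x0 by blast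
    next
      case False
      then have "Y \<in> clone_sets P lt" using h(2) unfolding parts_def by blast
      then obtain y0 where y0: "Y = {y\<in>P - \<Union>(tangles P lt). down P lt y = down P lt y0 \<and> up P lt y = up P lt y0}"
        by (rule cloneE)
      show ?thesis
      proof (rule ccontr)
        assume "X \<inter> Y \<noteq> {}"
        then obtain z where "z \<in> X" "z \<in> Y" by blast
        then have "down P lt x0 = down P lt y0" "up P lt x0 = up P lt y0" using x0 y0 by auto
        then have "X = Y" using x0 y0 by simp
        then show False using h(3) by simp
      qed
    qed
  qed
qed

lemma parts_union: "\<Union>(parts P lt) = P"
proof
  show "\<Union>(parts P lt) \<subseteq> P"
  proof
    fix x assume "x \<in> \<Union>(parts P lt)"
    then obtain X where X: "X \<in> parts P lt" "x \<in> X" by blast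
    show "x \<in> P"
    proof (cases "X \<in> tangles P lt")
      case True then show ?thesis using tangles_sub X(2) by blast
    next
      case False
      then have "X \<in> clone_sets P lt" using X(1) unfolding parts_def by blast
      then obtain x0 where "X = {y\<in>P - \<Union>(tangles P lt). down P lt y = down P lt x0 \<and> up P lt y = up P lt x0}"
        by (rule cloneE)
      then show ?thesis using X(2) by blast
    qed
  qed
  show "P \<subseteq> \<Union>(parts P lt)"
  proof
    fix x assume xP: "x \<in> P"
    show "x \<in> \<Union>(parts P lt)"
    proof (cases "x \<in> \<Union>(tangles P lt)")
      case True then show ?thesis unfolding parts_def by blast
    next
      case False
      let ?C = "{y\<in>P - \<Union>(tangles P lt). down P lt y = down P lt x \<and> up P lt y = up P lt x}"
      have "?C \<in> clone_sets P lt" unfolding clone_sets_def Let_def using xP False by blast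
      moreover have "x \<in> ?C" using xP False by blast
      ultimately show ?thesis unfolding parts_def by blast
    qed
  qed
qed

lemma parts_fin: assumes "X \<in> parts P lt" shows "finite X"
proof -
  have "X \<subseteq> P" using parts_union assms by blast
  then show ?thesis using fin by (rule finite_subset)
qed

lemma aut_image: assumes "X \<in> parts P lt" "f \<in> aut lt P" shows "f ` X = X"
proof -
  have XP: "X \<subseteq> P" using parts_union assms(1) by blast
  have "inj_on f P" using assms(2) unfolding aut_def bij_betw_def by blast
  then have inj: "inj_on f X" using XP by (rule inj_on_subset)
  have sub: "f ` X \<subseteq> X" using aut_part[OF assms(1,2)] by blast
  have "card (f ` X) = card X" using card_image[OF inj] .
  then show ?thesis using card_subset_eq[OF parts_fin[OF assms(1)] sub] by simp
qed

lemma restr_aut: assumes "X \<in> parts P lt" "f \<in> aut lt P"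
  shows "(\<lambda>x. if x \<in> X then f x else x) \<in> aut lt X"
proof -
  have XP: "X \<subseteq> P" using parts_union assms(1) by blast
  have "inj_on f P" using assms(2) unfolding aut_def bij_betw_def by blast
  then have inj: "inj_on f X" using XP by (rule inj_on_subset)
  have "bij_betw f X X" using inj aut_image[OF assms] unfolding bij_betw_def by simp
  then have "bij_betw (\<lambda>x. if x \<in> X then f x else x) X X" by (rule bij_betw_cong[THEN iffD2, rotated]) simp
  moreover have "\<forall>x\<in>X. \<forall>y\<in>X. lt (f x) (f y) \<longleftrightarrow> lt x y" using assms(2) XP unfolding aut_def by blast
  ultimately show ?thesis unfolding aut_def by simp
qed


lemma pm_aut: assumes g: "g \<in> Pi\<^sub>E (parts P lt) (aut lt)" shows "prod_map (parts P lt) g \<in> aut lt P"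
proof -
  let ?Q = "parts P lt" and ?F = "prod_map (parts P lt) g"
  note dj = parts_disj
  have gA: "X \<in> ?Q \<Longrightarrow> g X \<in> aut lt X" for X using g by (simp add: PiE_iff)
  have gP: "X \<in> ?Q \<Longrightarrow> g X \<in> aut lt P" for X using gA aut_ext by (meson subsetD)
  have memX: "X \<in> ?Q \<Longrightarrow> x \<in> X \<Longrightarrow> g X x \<in> X" for X x using aut_mem gA by metis
  have idX: "X \<in> ?Q \<Longrightarrow> x \<notin> X \<Longrightarrow> g X x = x" for X x using gA aut_id by metis
  have part: "x \<in> P \<Longrightarrow> \<exists>X\<in>?Q. x \<in> X" for x using parts_union by blast
  have XP: "X \<in> ?Q \<Longrightarrow> X \<subseteq> P" for X using parts_union by blast
  have Fx: "X \<in> ?Q \<Longrightarrow> x \<in> X \<Longrightarrow> ?F x = g X x" for X x using pm_in[OF dj] by simp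
  have "inj_on ?F P"
  proof (rule inj_onI)
    fix x y assume h: "x \<in> P" "y \<in> P" "?F x = ?F y"
    obtain X where X: "X \<in> ?Q" "x \<in> X" using part h(1) by blast
    obtain Y where Y: "Y \<in> ?Q" "y \<in> Y" using part h(2) by blast
    have e: "g X x = g Y y" using h(3) Fx[OF X] Fx[OF Y] by simp
    show "x = y"
    proof (cases "X = Y")
      case True
      have "inj_on (g X) X" using aut_bij[OF gA[OF X(1)]] unfolding bij_betw_def by simp
      then show ?thesis using e True X(2) Y(2) unfolding inj_on_def by simp
    next
      case False
      have "g X x \<in> X" "g Y y \<in> Y" using memX X Y by simp_all
      moreover have "X \<inter> Y = {}" using dj X(1) Y(1) False by simp
      ultimately show ?thesis using e by auto
    qed
  qed
  moreover have "?F ` P = P"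
  proof
    show "?F ` P \<subseteq> P"
    proof
      fix z assume "z \<in> ?F ` P"
      then obtain x where x: "x \<in> P" "z = ?F x" by blast
      obtain X where X: "X \<in> ?Q" "x \<in> X" using part x(1) by blast
      have "z = g X x" using x(2) Fx[OF X] by simp
      moreover have "g X x \<in> X" using memX[OF X] .
      ultimately show "z \<in> P" using XP[OF X(1)] by blast
    qed
    show "P \<subseteq> ?F ` P"
    proof
      fix y assume y: "y \<in> P"
      obtain X where X: "X \<in> ?Q" "y \<in> X" using part y by blast
      have "g X ` X = X" using aut_bij[OF gA[OF X(1)]] unfolding bij_betw_def by simp
      then have "y \<in> g X ` X" using X(2) by simp
      then obtain x where x: "x \<in> X" "g X x = y" by (rule imageE) simp
      then have "?F x = y" using Fx[OF X(1) x(1)] by simp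
      moreover have "x \<in> P" using XP[OF X(1)] x(1) by blast
      ultimately show "y \<in> ?F ` P" by blast
    qed
  qed
  moreover have "\<forall>x\<in>P. \<forall>y\<in>P. lt (?F x) (?F y) \<longleftrightarrow> lt x y"
  proof (intro ballI)
    fix x y assume h: "x \<in> P" "y \<in> P"
    obtain X where X: "X \<in> ?Q" "x \<in> X" using part h(1) by blast
    obtain Y where Y: "Y \<in> ?Q" "y \<in> Y" using part h(2) by blast
    have F: "?F x = g X x" "?F y = g Y y" using Fx[OF X] Fx[OF Y] by auto
    show "lt (?F x) (?F y) \<longleftrightarrow> lt x y"
    proof (cases "X = Y")
      case True
      then show ?thesis using F aut_lt[OF gA[OF X(1)] X(2)] Y(2) by simp
    next
      case False
      have dXY: "X \<inter> Y = {}" using dj X(1) Y(1) False by simp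
      have gy: "g Y y \<in> Y" using memX Y by simp
      then have gyX: "g Y y \<notin> X" using dXY by blast
      have xY: "x \<notin> Y" using dXY X(2) by blast
      have gyP: "g Y y \<in> P" using XP[OF Y(1)] gy by blast
      have "lt (g X x) (g Y y) \<longleftrightarrow> lt (g X x) (g X (g Y y))" using idX[OF X(1) gyX] by simp
      also have "\<dots> \<longleftrightarrow> lt x (g Y y)" using aut_lt[OF gP[OF X(1)] h(1) gyP] .
      also have "\<dots> \<longleftrightarrow> lt (g Y x) (g Y y)" using idX[OF Y(1) xY] by simp
      also have "\<dots> \<longleftrightarrow> lt x y" using aut_lt[OF gP[OF Y(1)] h] .
      finally show ?thesis using F by simp
    qed
  qed
  moreover have "\<forall>x. x \<notin> P \<longrightarrow> ?F x = x"
  proof (intro allI impI)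
    fix x assume "x \<notin> P"
    then have "x \<notin> \<Union>?Q" using parts_union by simp
    then show "?F x = x" by (rule pm_out)
  qed
  ultimately show ?thesis unfolding aut_def bij_betw_def by simp
qed

lemma pm_restr: assumes f: "f \<in> aut lt P"
  shows "(\<lambda>X\<in>parts P lt. \<lambda>x. if x \<in> X then f x else x) \<in> Pi\<^sub>E (parts P lt) (aut lt)"
    "prod_map (parts P lt) (\<lambda>X\<in>parts P lt. \<lambda>x. if x \<in> X then f x else x) = f"
proof -
  show "(\<lambda>X\<in>parts P lt. \<lambda>x. if x \<in> X then f x else x) \<in> Pi\<^sub>E (parts P lt) (aut lt)"
    using restr_aut[OF _ f] by auto
  show "prod_map (parts P lt) (\<lambda>X\<in>parts P lt. \<lambda>x. if x \<in> X then f x else x) = f"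
  proof
    fix x
    show "prod_map (parts P lt) (\<lambda>X\<in>parts P lt. \<lambda>x. if x \<in> X then f x else x) x = f x"
    proof (cases "x \<in> P")
      case True
      then obtain X where X: "X \<in> parts P lt" "x \<in> X" using parts_union by blast
      show ?thesis using pm_in[OF parts_disj X] X by simp
    next
      case False
      then have "f x = x" using f unfolding aut_def by blast
      then show ?thesis using pm_out[of x "parts P lt"] parts_union False by simp
    qed
  qed
qed

lemma main:
  shows "(\<forall>X\<in>parts P lt. \<forall>Y\<in>parts P lt. X \<noteq> Y \<longrightarrow> X \<inter> Y = {}) \<and>
         \<Union>(parts P lt) = P \<and>
         (\<forall>X\<in>parts P lt. aut lt X \<subseteq> aut lt P) \<and>
         bij_betw (prod_map (parts P lt)) (Pi\<^sub>E (parts P lt) (aut lt)) (aut lt P) \<and>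
         (\<forall>g\<in>Pi\<^sub>E (parts P lt) (aut lt). \<forall>h\<in>Pi\<^sub>E (parts P lt) (aut lt).
            prod_map (parts P lt) (\<lambda>X\<in>parts P lt. g X \<circ> h X) =
            prod_map (parts P lt) g \<circ> prod_map (parts P lt) h)"
proof (intro conjI)
  show "\<forall>X\<in>parts P lt. \<forall>Y\<in>parts P lt. X \<noteq> Y \<longrightarrow> X \<inter> Y = {}" by (rule parts_disj)
  show "\<Union>(parts P lt) = P" by (rule parts_union)
  show "\<forall>X\<in>parts P lt. aut lt X \<subseteq> aut lt P" by (intro ballI) (rule aut_ext)
  let ?Q = "parts P lt"
  have Fx: "X \<in> ?Q \<Longrightarrow> x \<in> X \<Longrightarrow> prod_map ?Q g x = g X x" for X x g using pm_in[OF parts_disj] by simp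
  have out: "\<not> (\<exists>X\<in>?Q. x \<in> X) \<Longrightarrow> prod_map ?Q g x = x" for x g by (rule pm_out) simp
  show "bij_betw (prod_map ?Q) (Pi\<^sub>E ?Q (aut lt)) (aut lt P)"
    unfolding bij_betw_def
  proof (intro conjI)
    show "inj_on (prod_map ?Q) (Pi\<^sub>E ?Q (aut lt))"
    proof (rule inj_onI)
      fix g h assume gh: "g \<in> Pi\<^sub>E ?Q (aut lt)" "h \<in> Pi\<^sub>E ?Q (aut lt)" "prod_map ?Q g = prod_map ?Q h"
      show "g = h"
      proof (rule PiE_ext[OF gh(1,2)])
        fix X assume X: "X \<in> ?Q"
        have gA: "g X \<in> aut lt X" "h X \<in> aut lt X" using gh(1,2) X by (simp_all add: PiE_iff)
        show "g X = h X"
        proof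
          fix x
          show "g X x = h X x"
          proof (cases "x \<in> X")
            case True
            then show ?thesis using Fx[OF X True, of g] Fx[OF X True, of h] gh(3) by simp
          next
            case False
            then show ?thesis using aut_id[OF gA(1) False] aut_id[OF gA(2) False] by simp
          qed
        qed
      qed
    qed
    show "prod_map ?Q ` Pi\<^sub>E ?Q (aut lt) = aut lt P"
    proof
      show "prod_map ?Q ` Pi\<^sub>E ?Q (aut lt) \<subseteq> aut lt P" using pm_aut by (rule image_subsetI)
      show "aut lt P \<subseteq> prod_map ?Q ` Pi\<^sub>E ?Q (aut lt)"
      proof
        fix f assume f: "f \<in> aut lt P"
        show "f \<in> prod_map ?Q ` Pi\<^sub>E ?Q (aut lt)"
        proof (rule image_eqI)
          show "f = prod_map ?Q (\<lambda>X\<in>parts P lt. \<lambda>x. if x \<in> X then f x else x)"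
            using pm_restr(2)[OF f] by simp
          show "(\<lambda>X\<in>parts P lt. \<lambda>x. if x \<in> X then f x else x) \<in> Pi\<^sub>E ?Q (aut lt)"
            by (rule pm_restr(1)[OF f])
        qed
      qed
    qed
  qed
  show "\<forall>g\<in>Pi\<^sub>E ?Q (aut lt). \<forall>h\<in>Pi\<^sub>E ?Q (aut lt).
            prod_map ?Q (\<lambda>X\<in>?Q. g X \<circ> h X) = prod_map ?Q g \<circ> prod_map ?Q h"
  proof (intro ballI ext)
    fix g h x assume gh: "g \<in> Pi\<^sub>E ?Q (aut lt)" "h \<in> Pi\<^sub>E ?Q (aut lt)"
    show "prod_map ?Q (\<lambda>X\<in>?Q. g X \<circ> h X) x = (prod_map ?Q g \<circ> prod_map ?Q h) x"
    proof (cases "\<exists>X\<in>?Q. x \<in> X")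
      case True
      then obtain X where X: "X \<in> ?Q" "x \<in> X" by blast
      have "h X \<in> aut lt X" using gh(2) X(1) by (simp add: PiE_iff)
      then have hx: "h X x \<in> X" using X(2) by (rule aut_mem)
      show ?thesis using Fx[OF X, of "\<lambda>X\<in>?Q. g X \<circ> h X"] Fx[OF X, of h] Fx[OF X(1) hx, of g] X(1)
        by simp
    next
      case False
      then show ?thesis using out[OF False] by simp
    qed
  qed
qed

end

theorem theorem2p14:
  fixes P :: "'a set" and lt :: "'a \<Rightarrow> 'a \<Rightarrow> bool"
  assumes "finite P" and "strict_poset P lt" and "free_3_1 P lt"
  shows "(\<forall>X\<in>parts P lt. \<forall>Y\<in>parts P lt. X \<noteq> Y \<longrightarrow> X \<inter> Y = {}) \<and>
         \<Union>(parts P lt) = P \<and>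
         (\<forall>X\<in>parts P lt. aut lt X \<subseteq> aut lt P) \<and>
         bij_betw (prod_map (parts P lt)) (Pi\<^sub>E (parts P lt) (aut lt)) (aut lt P) \<and>
         (\<forall>g\<in>Pi\<^sub>E (parts P lt) (aut lt). \<forall>h\<in>Pi\<^sub>E (parts P lt) (aut lt).
            prod_map (parts P lt) (\<lambda>X\<in>parts P lt. g X \<circ> h X) =
            prod_map (parts P lt) g \<circ> prod_map (parts P lt) h)"
proof -
  interpret pp P lt using assms by unfold_locales
  show ?thesis by (rule main)
qed

end
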